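(* Let $k$ be a positive integer. Then there exists a polynomial map $f:\mathbb{C}^2\to\mathbb{C}^2$ with $\mu_f=k+1$ such that $\mathbb{C}^2\setminus f(\mathbb{C}^2)$ has at least one isolated point.
   Context: For a dominant polynomial map $f$ (i.e. $f(\mathbb{C}^2)$ dense in $\mathbb{C}^2$), $\mu_f$ is the number of preimages of a generic point of $\mathbb{C}^2$. *)

theory Defs
  imports "HOL-Analysis.Analysis"
begin

definition poly_fun2 :: "(complex \<times> complex \<Rightarrow> complex) \<Rightarrow> bool" where
  "poly_fun2 g \<longleftrightarrow> (\<exists>(N::nat) (c::nat \<Rightarrow> nat \<Rightarrow> complex).
      \<forall>x y. g (x, y) = (\<Sum>i\<le>N. \<Sum>j\<le>N. c i j * x ^ i * y ^ j))"

definition poly_map2 :: "(complex \<times> complex \<Rightarrow> complex \<times> complex) \<Rightarrow> bool" where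
  "poly_map2 f \<longleftrightarrow> poly_fun2 (\<lambda>p. fst (f p)) \<and> poly_fun2 (\<lambda>p. snd (f p))"

definition dominant2 :: "(complex \<times> complex \<Rightarrow> complex \<times> complex) \<Rightarrow> bool" where
  "dominant2 f \<longleftrightarrow> closure (range f) = UNIV"

text \<open>mu_f = m: a generic point (i.e. every point outside the zero set of some
  nonzero polynomial) has exactly m preimages.\<close>
definition generic_fiber_card :: "(complex \<times> complex \<Rightarrow> complex \<times> complex) \<Rightarrow> nat \<Rightarrow> bool" where
  "generic_fiber_card f m \<longleftrightarrow> (\<exists>h. poly_fun2 h \<and> h \<noteq> (\<lambda>_. 0) \<and>
      (\<forall>p. h p \<noteq> 0 \<longrightarrow> finite (f -` {p}) \<and> card (f -` {p}) = m))"

end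

theory Submission imports Defs "HOL-Computational_Algebra.Fundamental_Theorem_Algebra" begin

definition ev2 :: "complex poly poly \<Rightarrow> complex \<times> complex \<Rightarrow> complex" where
  "ev2 Q = (\<lambda>(x,y). poly (poly Q [:y:]) x)"

lemma poly_le: "degree p \<le> n \<Longrightarrow> poly p x = (\<Sum>i\<le>n. coeff p i * x ^ i)"
  for p :: "'a::comm_semiring_1 poly"
proof -
  assume "degree p \<le> n"
  then have "poly p x = poly (\<Sum>i\<le>n. monom (coeff p i) i) x"
    by (simp add: poly_as_sum_of_monoms')
  also have "\<dots> = (\<Sum>i\<le>n. coeff p i * x ^ i)"
    by (simp only: poly_sum poly_monom)
  finally show ?thesis .
qed

lemma ev2_fun: "poly_fun2 (ev2 Q)"
proof -
  define N where "N = degree Q + (\<Sum>i\<le>degree Q. degree (coeff Q i))"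
  have dQ: "degree Q \<le> N" unfolding N_def by simp
  have dc: "degree (coeff Q i) \<le> N" for i
  proof (cases "i \<le> degree Q")
    case True
    have "degree (coeff Q i) \<le> (\<Sum>i\<le>degree Q. degree (coeff Q i))"
      using True by (intro member_le_sum) auto
    then show ?thesis unfolding N_def by simp
  next
    case False then show ?thesis by (simp add: coeff_eq_0)
  qed
  have "ev2 Q (x, y) = (\<Sum>i\<le>N. \<Sum>j\<le>N. coeff (coeff Q j) i * x ^ i * y ^ j)" for x y
  proof -
    have "poly Q [:y:] = (\<Sum>j\<le>N. coeff Q j * [:y:] ^ j)"
      using dQ by (rule poly_le)
    then have "ev2 Q (x,y) = poly (\<Sum>j\<le>N. coeff Q j * [:y:] ^ j) x"
      unfolding ev2_def by simp
    also have "\<dots> = (\<Sum>j\<le>N. poly (coeff Q j) x * y ^ j)"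
      by (simp add: poly_sum poly_mult poly_power)
    also have "\<dots> = (\<Sum>j\<le>N. \<Sum>i\<le>N. coeff (coeff Q j) i * x ^ i * y ^ j)"
      by (simp add: poly_le[OF dc] sum_distrib_right)
    also have "\<dots> = (\<Sum>i\<le>N. \<Sum>j\<le>N. coeff (coeff Q j) i * x ^ i * y ^ j)"
      by (rule sum.swap)
    finally show ?thesis .
  qed
  then show ?thesis unfolding poly_fun2_def
    by (intro exI[of _ N] exI[of _ "\<lambda>i j. coeff (coeff Q j) i"]) simp
qed

lemma ev2_add: "ev2 (P + Q) p = ev2 P p + ev2 Q p"
  by (cases p) (simp add: ev2_def)
lemma ev2_mult: "ev2 (P * Q) p = ev2 P p * ev2 Q p"
  by (cases p) (simp add: ev2_def)
lemma ev2_diff: "ev2 (P - Q) p = ev2 P p - ev2 Q p"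
  by (cases p) (simp add: ev2_def)
lemma ev2_power: "ev2 (P ^ n) p = ev2 P p ^ n"
  by (cases p) (simp add: ev2_def poly_power)
lemma ev2_const: "ev2 [:[:c:]:] p = c"
  by (cases p) (simp add: ev2_def)
lemma ev2_X: "ev2 [:[:0,1:]:] p = fst p"
  by (cases p) (simp add: ev2_def)
lemma ev2_Y: "ev2 [:0,1:] p = snd p"
  by (cases p) (simp add: ev2_def)


lemma card_roots_sqf:
  fixes p :: "complex poly"
  assumes "rsquarefree p"
  shows "card {z. poly p z = 0} = degree p"
proof -
  have p0: "p \<noteq> 0" using assms by (simp add: rsquarefree_def)
  have "size (proots p) = (\<Sum>x\<in>set_mset (proots p). count (proots p) x)"
    by (simp add: size_multiset_overloaded_eq)
  also have "\<dots> = (\<Sum>x\<in>set_mset (proots p). 1)"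
    using p0 assms by (intro sum.cong) (auto simp: rsquarefree_root_order)
  also have "\<dots> = card {z. poly p z = 0}" using p0 by simp
  finally show ?thesis using p0 by (simp add: size_proots_complex)
qed

lemma pderiv_test:
  "poly (pderiv (monom 1 (Suc k) + [:w, - v:])) t = of_nat (Suc k) * t ^ k - (v::complex)"
  by (simp add: pderiv_add pderiv_monom pderiv_pCons poly_monom)

lemma degP: "k \<ge> 1 \<Longrightarrow> degree (monom 1 (Suc k) + [:w, - v:]) = Suc k"
  for w v :: complex
  by (subst degree_add_eq_left) (auto simp: degree_monom_eq)


definition fk :: "nat \<Rightarrow> complex \<times> complex \<Rightarrow> complex \<times> complex" where
  "fk k = (\<lambda>(x,y). (x*y, x^k + (x*y-1)*y))"

definition hk :: "nat \<Rightarrow> complex \<times> complex \<Rightarrow> complex" where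
  "hk k = (\<lambda>(u,v). (u*(u-1)) * (of_nat k ^ k * v ^ Suc k - of_nat (Suc k) ^ Suc k * (u*(u-1)) ^ k))"

lemma fiber_card:
  assumes k: "k \<ge> 1" and h: "hk k (u, v) \<noteq> 0"
  shows "finite (fk k -` {(u,v)}) \<and> card (fk k -` {(u,v)}) = k + 1"
proof -
  define w where "w = u*(u-1)"
  define P where "P = monom 1 (Suc k) + [:w, - v:]"
  have w0: "w \<noteq> 0" using h by (auto simp: hk_def w_def)
  have u0: "u \<noteq> 0" using w0 by (auto simp: w_def)
  have hw: "of_nat k ^ k * v ^ Suc k \<noteq> of_nat (Suc k) ^ Suc k * w ^ k"
    using h by (auto simp: hk_def w_def)
  have polyP: "poly P t = t ^ Suc k + w - v * t" for t
    by (simp add: P_def poly_monom)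
  have dP: "poly (pderiv P) t = of_nat (Suc k) * t ^ k - v" for t
    unfolding P_def by (rule pderiv_test)
  have degP': "degree P = Suc k" unfolding P_def using k by (rule degP)
  have sqf: "rsquarefree P"
    unfolding rsquarefree_roots
  proof (intro allI notI)
    fix t assume "poly P t = 0 \<and> poly (pderiv P) t = 0"
    then have e1: "t ^ Suc k + w - v * t = 0" and e2: "v = of_nat (Suc k) * t ^ k"
      using polyP dP by auto
    have ww: "w = of_nat k * t ^ Suc k"
      using e1 unfolding e2 by (simp add: algebra_simps)
    have "of_nat k ^ k * v ^ Suc k = of_nat k ^ k * of_nat (Suc k) ^ Suc k * t ^ (k * Suc k)"
      unfolding e2 by (simp add: power_mult_distrib power_mult[symmetric] power_add mult.commute)
    also have "\<dots> = of_nat (Suc k) ^ Suc k * w ^ k"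
      unfolding ww by (simp add: power_mult_distrib power_mult[symmetric] power_add mult.commute)
    finally show False using hw by simp
  qed
  have fib: "fk k -` {(u,v)} = (\<lambda>t. (t, u / t)) ` {t. poly P t = 0}"
  proof (intro set_eqI iffI)
    fix p assume "p \<in> fk k -` {(u,v)}"
    then obtain x y where p: "p = (x,y)" and xy: "x*y = u" and v: "x^k + (x*y-1)*y = v"
      by (cases p) (auto simp: fk_def)
    have x0: "x \<noteq> 0" using xy u0 by auto
    have y: "y = u / x" using xy x0 by (auto simp: field_simps)
    have "x * (x^k + (x*y-1)*y) = x * v" using v by simp
    then have "x ^ Suc k + w - v * x = 0"
      unfolding w_def using xy by (simp add: algebra_simps)
    then show "p \<in> (\<lambda>t. (t, u / t)) ` {t. poly P t = 0}"
      using p y polyP by auto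
  next
    fix p assume "p \<in> (\<lambda>t. (t, u / t)) ` {t. poly P t = 0}"
    then obtain t where p: "p = (t, u/t)" and r: "t ^ Suc k + w - v * t = 0"
      using polyP by auto
    have t0: "t \<noteq> 0" using r w0 by auto
    have "t ^ k + (u - 1) * (u / t) = v"
    proof -
      have "t * (t ^ k + (u - 1) * (u / t)) = t * v"
        using r t0 unfolding w_def by (simp add: field_simps)
      then show ?thesis using t0 by simp
    qed
    then show "p \<in> fk k -` {(u,v)}"
      using p t0 by (simp add: fk_def)
  qed
  have P0: "P \<noteq> 0" using sqf by (simp add: rsquarefree_def)
  have inj: "inj_on (\<lambda>t. (t, u / t)) {t. poly P t = 0}"
    by (auto intro: inj_onI)
  show ?thesis
    unfolding fib using poly_roots_finite[OF P0] card_image[OF inj] card_roots_sqf[OF sqf] degP'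
    by simp
qed


lemma root_pre:
  assumes t0: "t \<noteq> 0" and r: "t ^ Suc k + u*(u-1) - v * t = 0"
  shows "fk k (t, u / t) = (u, v)"
proof -
  have "t * (t ^ k + (u - 1) * (u / t)) = t * v"
    using r t0 by (simp add: field_simps)
  then have "t ^ k + (u - 1) * (u / t) = v" using t0 by simp
  then show ?thesis using t0 by (simp add: fk_def)
qed

lemma has_root:
  fixes p :: "complex poly"
  assumes "degree p \<ge> 1"
  shows "\<exists>z. poly p z = 0"
  using assms by (intro fundamental_theorem_of_algebra_alt) auto

lemma range_fk:
  assumes k: "k \<ge> 1"
  shows "range (fk k) = - {(1,0)}"
proof (intro set_eqI iffI)
  fix p assume "p \<in> range (fk k)"
  then obtain x y where p: "p = fk k (x,y)" by auto
  show "p \<in> - {(1,0)}"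
  proof
    assume "p \<in> {(1,0)}"
    then have "x*y = 1" "x^k + (x*y-1)*y = 0" using p by (auto simp: fk_def)
    then show False using k by auto
  qed
next
  fix p assume "p \<in> - {((1::complex),(0::complex))}"
  then obtain u v where p: "p = (u,v)" and uv: "(u,v) \<noteq> (1,0)" by (cases p) auto
  show "p \<in> range (fk k)"
  proof (cases "u = 0")
    case True
    have "fk k (0, -v) = (u, v)" using True k by (simp add: fk_def)
    then show ?thesis using p by (metis rangeI)
  next
    case u0: False
    show ?thesis
    proof (cases "u = 1")
      case False
      define P where "P = monom 1 (Suc k) + [:u*(u-1), - v:]"
      have "degree P = Suc k" unfolding P_def using k by (rule degP)
      then obtain t where "poly P t = 0" using has_root[of P] by auto
      then have r: "t ^ Suc k + u*(u-1) - v * t = 0" by (simp add: P_def poly_monom algebra_simps)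
      have t0: "t \<noteq> 0" using r u0 False by auto
      show ?thesis using root_pre[OF t0 r] p by (metis rangeI)
    next
      case True
      then have v0: "v \<noteq> 0" using uv by auto
      define Q where "Q = monom 1 k + [:- v:]"
      have "degree Q = k" unfolding Q_def using k
        by (subst degree_add_eq_left) (auto simp: degree_monom_eq)
      then obtain t where "poly Q t = 0" using has_root[of Q] k by auto
      then have tk: "t ^ k = v" by (simp add: Q_def poly_monom)
      have t0: "t \<noteq> 0" using tk v0 k by auto
      have "t ^ Suc k = v * t" using tk by (simp add: mult.commute)
      then have r: "t ^ Suc k + u*(u-1) - v * t = 0" using True by simp
      show ?thesis using root_pre[OF t0 r] p by (metis rangeI)
    qed
  qed
qed

theorem lemma2p7:
  fixes k :: nat
  assumes "k \<ge> 1"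
  shows "\<exists>f. poly_map2 f \<and> dominant2 f \<and> generic_fiber_card f (k + 1) \<and>
           (\<exists>p. p \<in> - range f \<and> \<not> p islimpt (- range f))"
proof (intro exI conjI)
  let ?X = "[:[:0,1:]:] :: complex poly poly" and ?Y = "[:0,1:] :: complex poly poly"
  have f1: "(\<lambda>p. fst (fk k p)) = ev2 (?X * ?Y)"
    by (rule ext, case_tac p) (simp add: fk_def ev2_def poly_power)
  have f2: "(\<lambda>p. snd (fk k p)) = ev2 (?X ^ k + (?X * ?Y - 1) * ?Y)"
    by (rule ext, case_tac p) (simp add: fk_def ev2_def poly_power)
  show "poly_map2 (fk k)"
    unfolding poly_map2_def f1 f2 by (simp add: ev2_fun)
  have rg: "range (fk k) = - {(1,0)}" using assms by (rule range_fk)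
  have lim: "(1,0) islimpt (- {((1::complex),(0::complex))})"
  proof -
    have "(1,0) islimpt (UNIV :: (complex \<times> complex) set)" by (rule islimpt_UNIV)
    moreover have "(UNIV :: (complex \<times> complex) set) = insert (1,0) (- {(1,0)})" by auto
    ultimately show ?thesis by (metis islimpt_insert)
  qed
  show "dominant2 (fk k)"
    unfolding dominant2_def rg closure_def using lim by auto
  show "(1,0) \<in> - range (fk k)" using rg by simp
  show "\<not> (1,0) islimpt (- range (fk k))" unfolding rg by (simp add: islimpt_finite)
  let ?W = "?X * (?X - 1)"
  have hh: "hk k = ev2 (?W * ([:[:of_nat k ^ k:]:] * ?Y ^ Suc k - [:[:of_nat (Suc k) ^ Suc k:]:] * ?W ^ k))"
    by (rule ext, case_tac x) (simp add: hk_def ev2_def poly_power)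
  have hne: "hk k \<noteq> (\<lambda>_. 0)"
  proof
    assume "hk k = (\<lambda>_. 0)"
    then have "hk k (2, 0) = 0" by simp
    moreover have "complex_of_nat (Suc k) \<noteq> 0" by (simp only: of_nat_eq_0_iff)
    ultimately show False by (simp add: hk_def)
  qed
  show "generic_fiber_card (fk k) (k + 1)"
    unfolding generic_fiber_card_def
  proof (intro exI conjI allI impI)
    show "poly_fun2 (hk k)" unfolding hh by (rule ev2_fun)
    show "hk k \<noteq> (\<lambda>_. 0)" by (rule hne)
    fix p assume "hk k p \<noteq> 0"
    then have "finite (fk k -` {p}) \<and> card (fk k -` {p}) = k + 1"
      using fiber_card[OF assms] by (cases p) auto
    then show "finite (fk k -` {p})" "card (fk k -` {p}) = k + 1" by auto
  qed
qed

end
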